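(* Let $\mathcal{X}$ be a finite set, $T>0$, $\alpha>0$, $r:\mathcal{X}\to\mathbb{R}$ a reward function, and $Q^{\mathrm{pre}}(t)$, $t\in[0,T]$, a pretrained time-dependent CTMC generator on $\mathcal{X}$. Consider all CTMCs $(x_t)_{t\in[0,T]}$ started from the fixed initial distribution $p_{\lim}$ (a Dirac mass at a single state) and driven by a generator $Q(t)$, and let $Q^{\star}$ maximize, over all such generators (the fully nonparametric/realizable class), the objective $$J(Q)=\mathbb{E}_{x_{0:T}\sim P^{Q}}\big[r(x_T)\big]-\alpha\,\mathbb{E}_{x_{0:T}\sim P^{Q}}\Big[\int_0^T\sum_{y\neq x_t}\Big\{Q^{\mathrm{pre}}_{x_t,y}(t)-Q_{x_t,y}(t)+Q_{x_t,y}(t)\log\frac{Q_{x_t,y}(t)}{Q^{\mathrm{pre}}_{x_t,y}(t)}\Big\}dt\Big].$$ Then the distribution at time $T$ of the CTMC with generator $Q^{\star}$ started from $p_{\lim}$ is proportional to $\exp(r(x)/\alpha)\,p^{\mathrm{pre}}(x)$, where $p^{\mathrm{pre}}$ is the time-$T$ distribution of the CTMC with generator $Q^{\mathrm{pre}}$ started from $p_{\lim}$.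
   Context: A (time-dependent) CTMC generator on a finite set $\mathcal{X}$ is a family of matrices $Q(t)=(Q_{x,y}(t))_{x,y\in\mathcal{X}}$ with $Q_{x,y}(t)\ge 0$ for $x\neq y$ (the transition rate from $x$ to $y$) and $Q_{x,x}(t)=-\sum_{y\neq x}Q_{x,y}(t)$; the marginals $p_t$ satisfy the Kolmogorov forward equation $\frac{d p_t(x)}{dt}=\sum_{y\neq x}Q_{y,x}(t)p_t(y)-\sum_{y\neq x}Q_{x,y}(t)p_t(x)$, i.e. $P(x_{t+dt}=y\mid x_t=x)=\mathbb{1}(x=y)+Q_{x,y}(t)\,dt$. $P^{Q}$ denotes the path law of the CTMC with generator $Q$ on $[0,T]$ started at $p_{\lim}$. The convention $0\log(0/0)=0$ is used, and generators are assumed regular enough (e.g. continuous in $t$) that the forward/backward Kolmogorov equations have unique solutions. The second term of $J$ is the KL divergence between the path measures $P^{Q}$ and $P^{Q^{\mathrm{pre}}}$. *)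

theory Defs
  imports "HOL-Analysis.Analysis"
begin

definition is_generator :: "real \<Rightarrow> (real \<Rightarrow> 'x::finite \<Rightarrow> 'x \<Rightarrow> real) \<Rightarrow> bool" where
  "is_generator T Q \<longleftrightarrow>
     (\<forall>t\<in>{0..T}. \<forall>x y. x \<noteq> y \<longrightarrow> Q t x y \<ge> 0) \<and>
     (\<forall>t\<in>{0..T}. \<forall>x. Q t x x = - (\<Sum>y\<in>UNIV - {x}. Q t x y)) \<and>
     (\<forall>x y. continuous_on {0..T} (\<lambda>t. Q t x y))"

definition forward_sol ::
  "real \<Rightarrow> (real \<Rightarrow> 'x::finite \<Rightarrow> 'x \<Rightarrow> real) \<Rightarrow> ('x \<Rightarrow> real) \<Rightarrow> (real \<Rightarrow> 'x \<Rightarrow> real) \<Rightarrow> bool" where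
  "forward_sol T Q p0 p \<longleftrightarrow>
     p 0 = p0 \<and>
     (\<forall>t\<in>{0..T}. \<forall>x. ((\<lambda>s. p s x) has_real_derivative
        ((\<Sum>y\<in>UNIV - {x}. Q t y x * p t y) - (\<Sum>y\<in>UNIV - {x}. Q t x y * p t x)))
        (at t within {0..T}))"

definition dirac :: "'x \<Rightarrow> 'x \<Rightarrow> real" where
  "dirac x0 = (\<lambda>x. if x = x0 then 1 else 0)"

text \<open>Pointwise KL-rate term  b - a + a log(a/b)  with a = Q, b = Qpre,
  convention 0 log(0/0) = 0 and value +\<infinity> if a > 0 = b.\<close>
definition kl_rate :: "real \<Rightarrow> real \<Rightarrow> ennreal" where
  "kl_rate a b = (if a = 0 then ennreal b
                  else if b = 0 then \<infinity>
                  else ennreal (b - a + a * ln (a / b)))"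

text \<open>Path KL divergence KL(P^Q || P^Qpre), written via the marginals p of P^Q
  (expectation of the time integral = time integral of the expectation).\<close>
definition path_kl ::
  "real \<Rightarrow> (real \<Rightarrow> 'x::finite \<Rightarrow> 'x \<Rightarrow> real) \<Rightarrow> (real \<Rightarrow> 'x \<Rightarrow> 'x \<Rightarrow> real) \<Rightarrow> (real \<Rightarrow> 'x \<Rightarrow> real) \<Rightarrow> ennreal" where
  "path_kl T Qpre Q p =
     (\<integral>\<^sup>+ t\<in>{0..T}. (\<Sum>x\<in>UNIV. ennreal (p t x) *
         (\<Sum>y\<in>UNIV - {x}. kl_rate (Q t x y) (Qpre t x y))) \<partial>lborel)"

definition J_obj ::
  "real \<Rightarrow> real \<Rightarrow> ('x::finite \<Rightarrow> real) \<Rightarrow> (real \<Rightarrow> 'x \<Rightarrow> 'x \<Rightarrow> real) \<Rightarrow>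
   (real \<Rightarrow> 'x \<Rightarrow> 'x \<Rightarrow> real) \<Rightarrow> (real \<Rightarrow> 'x \<Rightarrow> real) \<Rightarrow> ereal" where
  "J_obj T \<alpha> r Qpre Q p =
     ereal (\<Sum>x\<in>UNIV. p T x * r x) - ereal \<alpha> * enn2ereal (path_kl T Qpre Q p)"

end

theory Submission
  imports Defs
begin



lemma cont_bound:
  fixes M :: "real \<Rightarrow> 'x::finite \<Rightarrow> 'x \<Rightarrow> real"
  assumes "\<forall>x y. continuous_on {a..b} (\<lambda>t. M t x y)"
  shows "\<exists>B. \<forall>t\<in>{a..b}. \<forall>x y. \<bar>M t x y\<bar> \<le> B"
proof -
  have "\<forall>p. \<exists>B. \<forall>t\<in>{a..b}. \<bar>M t (fst p) (snd p)\<bar> \<le> B"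
  proof
    fix p :: "'x \<times> 'x"
    have "compact ((\<lambda>t. M t (fst p) (snd p)) ` {a..b})"
      using assms by (intro compact_continuous_image) auto
    then have "bounded ((\<lambda>t. M t (fst p) (snd p)) ` {a..b})" by (rule compact_imp_bounded)
    then show "\<exists>B. \<forall>t\<in>{a..b}. \<bar>M t (fst p) (snd p)\<bar> \<le> B"
      unfolding bounded_iff by auto
  qed
  then obtain B where B: "\<And>p t. t \<in> {a..b} \<Longrightarrow> \<bar>M t (fst p) (snd p)\<bar> \<le> B p" by metis
  show ?thesis
  proof (intro exI ballI allI)
    fix t x y assume t: "t \<in> {a..b}"
    have "\<bar>M t x y\<bar> \<le> B (x,y)" using B[OF t, of "(x,y)"] by simp
    also have "\<dots> \<le> \<bar>B (x,y)\<bar>" by simp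
    also have "\<dots> \<le> (\<Sum>p\<in>UNIV. \<bar>B p\<bar>)" by (rule member_le_sum) auto
    finally show "\<bar>M t x y\<bar> \<le> (\<Sum>p\<in>UNIV. \<bar>B p\<bar>)" .
  qed
qed

lemma sum_offdiag_swap:
  fixes f :: "'x::finite \<Rightarrow> 'x \<Rightarrow> real"
  shows "(\<Sum>x\<in>UNIV. \<Sum>y\<in>UNIV - {x}. f x y) = (\<Sum>y\<in>UNIV. \<Sum>x\<in>UNIV - {y}. f x y)"
proof -
  have "(\<Sum>x\<in>UNIV. \<Sum>y\<in>UNIV - {x}. f x y) = (\<Sum>x\<in>UNIV. \<Sum>y\<in>{y. y \<in> UNIV \<and> x \<noteq> y}. f x y)"
    by (intro sum.cong) auto
  also have "\<dots> = (\<Sum>y\<in>UNIV. \<Sum>x\<in>{x. x \<in> UNIV \<and> x \<noteq> y}. f x y)"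
    by (rule sum.swap_restrict) auto
  also have "\<dots> = (\<Sum>y\<in>UNIV. \<Sum>x\<in>UNIV - {y}. f x y)"
    by (intro sum.cong) auto
  finally show ?thesis .
qed

lemma pos_lemma:
  fixes u :: "real \<Rightarrow> 'x::finite \<Rightarrow> real" and C :: "real \<Rightarrow> 'x \<Rightarrow> 'x \<Rightarrow> real"
  assumes T: "0 \<le> T"
  and bnd: "\<forall>t\<in>{0..T}. \<forall>x y. \<bar>C t x y\<bar> \<le> B"
  and off: "\<forall>t\<in>{0..T}. \<forall>x y. x \<noteq> y \<longrightarrow> 0 \<le> C t x y"
  and der: "\<forall>t\<in>{0..T}. \<forall>x. ((\<lambda>s. u s x) has_real_derivative (\<Sum>y\<in>UNIV. C t x y * u t y)) (at t within {0..T})"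
  and init: "\<forall>x. 0 \<le> u 0 x"
  shows "\<forall>t\<in>{0..T}. \<forall>x. 0 \<le> u t x"
proof -
  define N where "N = real (card (UNIV :: 'x set))"
  define K where "K = N * B + 1"
  have B0: "0 \<le> B" using bnd T by force
  have contu: "continuous_on {0..T} (\<lambda>s. u s x)" for x
    by (rule DERIV_continuous_on) (use der in auto)
  have main: "u t x + \<epsilon> * exp (K * t) > 0" if eps: "\<epsilon> > 0" and t: "t \<in> {0..T}" for \<epsilon> t x
  proof (rule ccontr)
    assume neg: "\<not> u t x + \<epsilon> * exp (K * t) > 0"
    define w where "w = (\<lambda>s y. u s y + \<epsilon> * exp (K * s))"
    have contw: "continuous_on {0..T} (\<lambda>s. w s y)" for y
      unfolding w_def by (intro continuous_intros contu)
    define S where "S = (\<Union>y. {0..T} \<inter> (\<lambda>s. w s y) -` {..0})"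
    have "t \<in> S" using neg t unfolding S_def w_def by (auto simp: not_less)
    then have Sne: "S \<noteq> {}" by auto
    have Scl: "closed S"
      unfolding S_def by (intro closed_Union) (auto intro!: continuous_closed_preimage contw)
    have Sbdd: "bdd_below S" unfolding S_def by (rule bdd_belowI[of _ 0]) auto
    define t1 where "t1 = Inf S"
    have t1S: "t1 \<in> S" unfolding t1_def by (rule closed_contains_Inf[OF Sne Sbdd Scl])
    then obtain x1 where t1: "t1 \<in> {0..T}" and wx1: "w t1 x1 \<le> 0" unfolding S_def by auto
    have w0: "w 0 y > 0" for y using init eps unfolding w_def by (smt (verit) exp_gt_zero mult_pos_pos)
    have t1pos: "t1 > 0" using t1 wx1 w0[of x1] by (cases "t1 = 0") auto
    have below: "w s y > 0" if "s \<in> {0..<t1}" for s y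
    proof (rule ccontr)
      assume "\<not> w s y > 0"
      then have "s \<in> S" using that t1 unfolding S_def by (auto simp: not_less)
      then have "t1 \<le> s" unfolding t1_def by (rule cInf_lower[OF _ Sbdd])
      then show False using that by auto
    qed
    have nonneg: "w t1 y \<ge> 0" for y
    proof -
      have "{0..<t1} \<subseteq> {0..T} \<inter> (\<lambda>s. w s y) -` {0..}"
        using below t1 by (auto simp: less_imp_le)
      moreover have "closed ({0..T} \<inter> (\<lambda>s. w s y) -` {0..})"
        by (intro continuous_closed_preimage contw) auto
      ultimately have "closure {0..<t1} \<subseteq> {0..T} \<inter> (\<lambda>s. w s y) -` {0..}"
        by (rule closure_minimal)
      then show ?thesis using t1pos by (auto simp: subset_iff)
    qed
    have wz: "w t1 x1 = 0" using nonneg[of x1] wx1 by auto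
    define D where "D = (\<Sum>y\<in>UNIV. C t1 x1 y * u t1 y) + \<epsilon> * (K * exp (K * t1))"
    have derw: "((\<lambda>s. w s x1) has_real_derivative D) (at t1 within {0..T})"
    proof -
      have d1: "((\<lambda>s. u s x1) has_real_derivative (\<Sum>y\<in>UNIV. C t1 x1 y * u t1 y)) (at t1 within {0..T})"
        using der t1 by blast
      have d2: "((\<lambda>s. \<epsilon> * exp (K * s)) has_real_derivative \<epsilon> * (K * exp (K * t1))) (at t1 within {0..T})"
        by (auto intro!: derivative_eq_intros)
      show ?thesis unfolding w_def D_def by (rule DERIV_add[OF d1 d2])
    qed
    have e1: "(\<Sum>y\<in>UNIV. C t1 x1 y * u t1 y)
        = (\<Sum>y\<in>UNIV. C t1 x1 y * w t1 y) - \<epsilon> * exp (K * t1) * (\<Sum>y\<in>UNIV. C t1 x1 y)"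
      unfolding w_def by (simp add: algebra_simps sum.distrib sum_distrib_left sum_subtractf)
    have e2: "(\<Sum>y\<in>UNIV. C t1 x1 y * w t1 y) \<ge> 0"
    proof (intro sum_nonneg)
      fix y show "0 \<le> C t1 x1 y * w t1 y"
        using off t1 nonneg[of y] wz by (cases "y = x1") auto
    qed
    have e3: "(\<Sum>y\<in>UNIV. C t1 x1 y) \<le> N * B"
    proof -
      have "(\<Sum>y\<in>UNIV. C t1 x1 y) \<le> (\<Sum>y\<in>(UNIV::'x set). B)"
        using bnd t1 by (intro sum_mono) (smt (verit))
      then show ?thesis unfolding N_def by simp
    qed
    have epos: "\<epsilon> * exp (K * t1) > 0" using eps by simp
    have m: "\<epsilon> * exp (K * t1) * (\<Sum>y\<in>UNIV. C t1 x1 y) \<le> \<epsilon> * exp (K * t1) * (N * B)"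
      by (rule mult_left_mono[OF e3]) (use epos in simp)
    have Deq: "D = (\<Sum>y\<in>UNIV. C t1 x1 y * w t1 y) - \<epsilon> * exp (K * t1) * (\<Sum>y\<in>UNIV. C t1 x1 y)
               + \<epsilon> * exp (K * t1) * K"
      unfolding D_def e1 by (simp add: algebra_simps)
    have "D \<ge> \<epsilon> * exp (K * t1) * (K - N * B)"
      using Deq m e2 by (simp add: right_diff_distrib)
    then have Dpos: "D > 0" using epos by (simp add: K_def)
    have "((\<lambda>s. (w s x1 - w t1 x1) / (s - t1)) \<longlongrightarrow> D) (at t1 within {0..T})"
      using derw by (simp add: has_field_derivative_iff)
    then have "eventually (\<lambda>s. (w s x1 - w t1 x1) / (s - t1) > 0) (at t1 within {0..T})"
      using Dpos by (rule order_tendstoD)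
    then obtain d where d: "d > 0" and dP: "\<forall>s\<in>{0..T}. s \<noteq> t1 \<and> dist s t1 < d \<longrightarrow> (w s x1 - w t1 x1) / (s - t1) > 0"
      unfolding eventually_at by blast
    define s where "s = max (t1 - d/2) (t1/2)"
    have s: "s \<in> {0..<t1}" "s \<in> {0..T}" "s \<noteq> t1" "dist s t1 < d"
      using t1pos d t1 unfolding s_def dist_real_def by auto
    have "(w s x1 - w t1 x1) / (s - t1) > 0" using dP s by blast
    moreover have "w s x1 > 0" using below s by blast
    ultimately show False using wz s(1) by (simp add: divide_pos_neg zero_less_divide_iff)
  qed
  show ?thesis
  proof (intro ballI allI)
    fix t x assume t: "t \<in> {0..T}"
    show "0 \<le> u t x"
    proof (rule ccontr)
      assume "\<not> 0 \<le> u t x"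
      define \<epsilon> where "\<epsilon> = - u t x / (2 * exp (K * t))"
      have "\<epsilon> > 0" using \<open>\<not> 0 \<le> u t x\<close> unfolding \<epsilon>_def by (simp add: divide_neg_pos)
      from main[OF this t, of x] have "u t x + \<epsilon> * exp (K * t) > 0" .
      moreover have "\<epsilon> * exp (K * t) = - u t x / 2" unfolding \<epsilon>_def by simp
      ultimately show False using \<open>\<not> 0 \<le> u t x\<close> by simp
    qed
  qed
qed




fun pic :: "real \<Rightarrow> (real \<Rightarrow> 'x \<Rightarrow> 'x \<Rightarrow> real) \<Rightarrow> ('x \<Rightarrow> real) \<Rightarrow> nat \<Rightarrow> real \<Rightarrow> 'x::finite \<Rightarrow> real" where
  "pic T M c 0 t x = c x"
| "pic T M c (Suc n) t x = c x + integral {t..T} (\<lambda>s. \<Sum>y\<in>UNIV. M s x y * pic T M c n s y)"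

declare pic.simps(2)[simp del]

lemma poly_has_integral:
  assumes "t \<le> (T::real)"
  shows "((\<lambda>s. (T - s) ^ m) has_integral (T - t) ^ Suc m / real (Suc m)) {t..T}"
proof -
  have "((\<lambda>s. (T - s) ^ m) has_integral ((\<lambda>s. - ((T - s) ^ Suc m / real (Suc m))) T - (\<lambda>s. - ((T - s) ^ Suc m / real (Suc m))) t)) {t..T}"
  proof (rule fundamental_theorem_of_calculus[OF assms])
    fix s assume "s \<in> {t..T}"
    show "((\<lambda>s. - ((T - s) ^ Suc m / real (Suc m))) has_vector_derivative (T - s) ^ m) (at s within {t..T})"
      unfolding has_real_derivative_iff_has_vector_derivative[symmetric]
      apply (auto intro!: derivative_eq_intros)
      apply (cases m)
       apply (auto simp: field_simps)
      done
  qed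
  then show ?thesis by simp
qed

context
  fixes T :: real and M :: "real \<Rightarrow> 'x::finite \<Rightarrow> 'x \<Rightarrow> real" and c :: "'x \<Rightarrow> real"
  assumes T0: "0 \<le> T"
    and contM: "\<forall>x y. continuous_on {0..T} (\<lambda>t. M t x y)"
    and Mnn: "\<forall>t\<in>{0..T}. \<forall>x y. 0 \<le> M t x y"
    and cpos: "\<forall>x. 0 < c x"
begin

lemma int_deriv:
  assumes "continuous_on {0..T} f" "t \<in> {0..T}"
  shows "((\<lambda>s. integral {s..T} f) has_real_derivative - f t) (at t within {0..T})"
  using integral_has_real_derivative'[OF assms] .

lemma pic_cont_deriv:
  "(\<forall>x. continuous_on {0..T} (\<lambda>t. pic T M c n t x)) \<and>
   (\<forall>x. \<forall>t\<in>{0..T}. ((\<lambda>s. pic T M c (Suc n) s x) has_real_derivative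
        - (\<Sum>y\<in>UNIV. M t x y * pic T M c n t y)) (at t within {0..T}))"
proof (induction n)
  case 0
  have d: "((\<lambda>s. pic T M c (Suc 0) s x) has_real_derivative
        - (\<Sum>y\<in>UNIV. M t x y * pic T M c 0 t y)) (at t within {0..T})" if "t \<in> {0..T}" for x t
  proof -
    have "continuous_on {0..T} (\<lambda>s. \<Sum>y\<in>UNIV. M s x y * pic T M c 0 s y)"
      using contM by (auto intro!: continuous_intros)
    from int_deriv[OF this that] show ?thesis
      by (auto intro!: derivative_eq_intros simp: pic.simps)
  qed
  then show ?case by auto
next
  case (Suc n)
  have cont: "continuous_on {0..T} (\<lambda>t. pic T M c (Suc n) t x)" for x
    by (rule DERIV_continuous_on) (use Suc in blast)
  have d: "((\<lambda>s. pic T M c (Suc (Suc n)) s x) has_real_derivative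
        - (\<Sum>y\<in>UNIV. M t x y * pic T M c (Suc n) t y)) (at t within {0..T})" if "t \<in> {0..T}" for x t
  proof -
    have "continuous_on {0..T} (\<lambda>s. \<Sum>y\<in>UNIV. M s x y * pic T M c (Suc n) s y)"
      by (intro continuous_intros; use contM cont in blast)
    from int_deriv[OF this that] show ?thesis
      by (simp only: pic.simps) (auto intro!: derivative_eq_intros)
  qed
  show ?case using cont d by blast
qed

lemma pic_cont: "continuous_on {0..T} (\<lambda>t. pic T M c n t x)"
  using pic_cont_deriv by blast

lemma pic_deriv: "t \<in> {0..T} \<Longrightarrow> ((\<lambda>s. pic T M c (Suc n) s x) has_real_derivative
        - (\<Sum>y\<in>UNIV. M t x y * pic T M c n t y)) (at t within {0..T})"
  using pic_cont_deriv by blast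

lemma pic_T: "pic T M c n T x = c x"
  by (cases n) (auto simp: pic.simps)

definition "dd n t x = pic T M c (Suc n) t x - pic T M c n t x"

lemma integrand_cont: "continuous_on {0..T} (\<lambda>s. \<Sum>y\<in>UNIV. M s x y * pic T M c n s y)"
  using contM pic_cont by (auto intro!: continuous_intros)

lemma integrand_int: "t \<in> {0..T} \<Longrightarrow> (\<lambda>s. \<Sum>y\<in>UNIV. M s x y * pic T M c n s y) integrable_on {t..T}"
  by (rule integrable_on_subinterval[OF integrable_continuous_interval[OF integrand_cont]]) auto

lemma dd_cont: "continuous_on {0..T} (\<lambda>s. dd n s x)"
  unfolding dd_def by (intro continuous_intros pic_cont)

lemma dd_0: "dd 0 t x = integral {t..T} (\<lambda>s. \<Sum>y\<in>UNIV. M s x y * c y)"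
  unfolding dd_def by (simp add: pic.simps)

lemma dd_Suc: "t \<in> {0..T} \<Longrightarrow> dd (Suc n) t x = integral {t..T} (\<lambda>s. \<Sum>y\<in>UNIV. M s x y * dd n s y)"
proof -
  assume t: "t \<in> {0..T}"
  have "dd (Suc n) t x = integral {t..T} (\<lambda>s. \<Sum>y\<in>UNIV. M s x y * pic T M c (Suc n) s y)
      - integral {t..T} (\<lambda>s. \<Sum>y\<in>UNIV. M s x y * pic T M c n s y)"
    unfolding dd_def by (simp add: pic.simps)
  also have "\<dots> = integral {t..T} (\<lambda>s. (\<Sum>y\<in>UNIV. M s x y * pic T M c (Suc n) s y)
      - (\<Sum>y\<in>UNIV. M s x y * pic T M c n s y))"
    using integrand_int[OF t, of x "Suc n"] integrand_int[OF t, of x n] by (rule integral_diff[symmetric])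
  also have "\<dots> = integral {t..T} (\<lambda>s. \<Sum>y\<in>UNIV. M s x y * dd n s y)"
    unfolding dd_def by (simp add: sum_subtractf right_diff_distrib)
  finally show ?thesis .
qed

lemma dd_nonneg: "t \<in> {0..T} \<Longrightarrow> 0 \<le> dd n t x"
proof (induction n arbitrary: t x)
  case 0
  show ?case unfolding dd_0
    by (rule integral_nonneg)
       (use integrand_int[OF 0, of x 0] 0 Mnn cpos in \<open>auto simp: pic.simps intro!: sum_nonneg mult_nonneg_nonneg less_imp_le[OF cpos[rule_format]]\<close>)
next
  case (Suc n)
  have i: "(\<lambda>s. \<Sum>y\<in>UNIV. M s x y * dd n s y) integrable_on {t..T}"
    by (rule integrable_on_subinterval[OF integrable_continuous_interval])
       (use Suc.prems contM dd_cont in \<open>auto intro!: continuous_intros\<close>)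
  show ?case unfolding dd_Suc[OF Suc.prems]
    by (rule integral_nonneg[OF i]) (use Suc.prems Mnn Suc.IH in \<open>auto intro!: sum_nonneg\<close>)
qed


lemma sumbound:
  fixes m f :: "'y::finite \<Rightarrow> real"
  assumes "\<forall>y. \<bar>m y\<bar> \<le> B" "\<forall>y. \<bar>f y\<bar> \<le> a"
  shows "\<bar>\<Sum>y\<in>UNIV. m y * f y\<bar> \<le> real CARD('y) * B * a"
proof -
  have "\<bar>\<Sum>y\<in>UNIV. m y * f y\<bar> \<le> (\<Sum>y\<in>UNIV. \<bar>m y * f y\<bar>)" by (rule sum_abs)
  also have "\<dots> \<le> (\<Sum>y\<in>(UNIV::'y set). B * a)"
    by (intro sum_mono) (use assms in \<open>auto simp: abs_mult intro!: mult_mono\<close>)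
  finally show ?thesis by simp
qed

lemma dd_bound:
  assumes B: "\<forall>t\<in>{0..T}. \<forall>x y. \<bar>M t x y\<bar> \<le> B"
  shows "t \<in> {0..T} \<Longrightarrow> \<bar>dd n t x\<bar> \<le> (\<Sum>z\<in>UNIV. \<bar>c z\<bar>) * (real CARD('x) * B) ^ Suc n * (T - t) ^ Suc n / fact (Suc n)"
proof (induction n arbitrary: t x)
  case 0
  define E where "E = (\<Sum>z\<in>UNIV. \<bar>c z\<bar>)"
  have cE: "\<bar>c y\<bar> \<le> E" for y unfolding E_def by (rule member_le_sum) auto
  have hi: "((\<lambda>s. real CARD('x) * B * E * (T - s) ^ 0) has_integral real CARD('x) * B * E * ((T - t) ^ Suc 0 / real (Suc 0))) {t..T}"
    by (rule has_integral_mult_right, rule poly_has_integral) (use 0 in auto)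
  have "\<bar>dd 0 t x\<bar> \<le> integral {t..T} (\<lambda>s. real CARD('x) * B * E * (T - s) ^ 0)"
    unfolding dd_0 real_norm_def[symmetric]
  proof (rule integral_norm_bound_integral)
    show "(\<lambda>s. \<Sum>y\<in>UNIV. M s x y * c y) integrable_on {t..T}"
      using integrand_int[OF 0, of x 0] by (simp add: pic.simps)
    show "(\<lambda>s. real CARD('x) * B * E * (T - s) ^ 0) integrable_on {t..T}" using hi by blast
    fix s assume "s \<in> {t..T}"
    then have "s \<in> {0..T}" using 0 by auto
    then show "norm (\<Sum>y\<in>UNIV. M s x y * c y) \<le> real CARD('x) * B * E * (T - s) ^ 0"
      using sumbound[of "M s x" B c E] B cE by auto
  qed
  also have "\<dots> = real CARD('x) * B * E * (T - t)" using integral_unique[OF hi] by simp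
  finally show ?case unfolding E_def by (simp add: algebra_simps)
next
  case (Suc n)
  define E where "E = (\<Sum>z\<in>UNIV. \<bar>c z\<bar>)"
  define K where "K = real CARD('x) * B * (E * (real CARD('x) * B) ^ Suc n / fact (Suc n))"
  have hi: "((\<lambda>s. K * (T - s) ^ Suc n) has_integral K * ((T - t) ^ Suc (Suc n) / real (Suc (Suc n)))) {t..T}"
    by (rule has_integral_mult_right, rule poly_has_integral) (use Suc.prems in auto)
  have i: "(\<lambda>s. \<Sum>y\<in>UNIV. M s x y * dd n s y) integrable_on {t..T}"
    by (rule integrable_on_subinterval[OF integrable_continuous_interval])
       (use Suc.prems contM dd_cont in \<open>auto intro!: continuous_intros\<close>)
  have "\<bar>dd (Suc n) t x\<bar> \<le> integral {t..T} (\<lambda>s. K * (T - s) ^ Suc n)"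
    unfolding dd_Suc[OF Suc.prems] real_norm_def[symmetric]
  proof (rule integral_norm_bound_integral[OF i])
    show "(\<lambda>s. K * (T - s) ^ Suc n) integrable_on {t..T}" using hi by blast
    fix s assume "s \<in> {t..T}"
    then have s: "s \<in> {0..T}" using Suc.prems by auto
    have "norm (\<Sum>y\<in>UNIV. M s x y * dd n s y) \<le> real CARD('x) * B * (E * (real CARD('x) * B) ^ Suc n * (T - s) ^ Suc n / fact (Suc n))"
    proof -
      have IHs: "\<forall>y. \<bar>dd n s y\<bar> \<le> E * (real CARD('x) * B) ^ Suc n * (T - s) ^ Suc n / fact (Suc n)"
        using Suc.IH[OF s] unfolding E_def by blast
      have Ms: "\<forall>y. \<bar>M s x y\<bar> \<le> B" using B s by blast
      show ?thesis using sumbound[OF Ms IHs] by simp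
    qed
    then show "norm (\<Sum>y\<in>UNIV. M s x y * dd n s y) \<le> K * (T - s) ^ Suc n"
      unfolding K_def by (simp add: field_simps)
  qed
  also have "\<dots> = K * ((T - t) ^ Suc (Suc n) / real (Suc (Suc n)))" by (rule integral_unique[OF hi])
  also have "\<dots> = E * (real CARD('x) * B) ^ Suc (Suc n) * (T - t) ^ Suc (Suc n) / fact (Suc (Suc n))"
    unfolding K_def by (simp add: field_simps)
  finally show ?case unfolding E_def .
qed


lemma pic_tele: "pic T M c n t x = c x + (\<Sum>i<n. dd i t x)"
  by (induction n) (auto simp: dd_def)

lemma backward_ode_ctx:
  "\<exists>k. (\<forall>x. k T x = c x) \<and> (\<forall>t\<in>{0..T}. \<forall>x. k t x > 0) \<and>
     (\<forall>t\<in>{0..T}. \<forall>x. ((\<lambda>s. k s x) has_real_derivative - (\<Sum>y\<in>UNIV. M t x y * k t y)) (at t within {0..T}))"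
proof -
  obtain B where B: "\<forall>t\<in>{0..T}. \<forall>x y. \<bar>M t x y\<bar> \<le> B" using cont_bound[OF contM] by blast
  have B0: "0 \<le> B" using B T0 by force
  define E where "E = (\<Sum>z\<in>UNIV. \<bar>c z\<bar>)"
  have E0: "0 \<le> E" unfolding E_def by (auto intro: sum_nonneg)
  define NB where "NB = real CARD('x) * B"
  have NB0: "0 \<le> NB" unfolding NB_def using B0 by simp
  define m where "m n = E * (inverse (fact (Suc n)) * (NB * T) ^ Suc n)" for n
  have dm: "\<bar>dd n t x\<bar> \<le> m n" if t: "t \<in> {0..T}" for n t x
  proof -
    have "(T - t) ^ Suc n \<le> T ^ Suc n" by (rule power_mono) (use t in auto)
    then have "E * NB ^ Suc n * (T - t) ^ Suc n \<le> E * NB ^ Suc n * T ^ Suc n"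
      by (intro mult_left_mono) (use E0 NB0 in auto)
    then have "E * NB ^ Suc n * (T - t) ^ Suc n / fact (Suc n) \<le> E * NB ^ Suc n * T ^ Suc n / fact (Suc n)"
      by (rule divide_right_mono) simp
    moreover have "\<bar>dd n t x\<bar> \<le> E * NB ^ Suc n * (T - t) ^ Suc n / fact (Suc n)"
      using dd_bound[OF B t] unfolding E_def NB_def .
    ultimately show ?thesis unfolding m_def by (simp add: power_mult_distrib field_simps)
  qed
  have sm: "summable m"
  proof -
    have "summable (\<lambda>n. inverse (fact n) * (NB * T) ^ n)" by (rule summable_exp)
    then have "summable (\<lambda>n. inverse (fact (Suc n)) * (NB * T) ^ Suc n)"
      by (subst summable_Suc_iff)
    then show ?thesis unfolding m_def by (rule summable_mult)
  qed
  define k where "k t x = c x + (\<Sum>i. dd i t x)" for t x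
  have U: "uniform_limit {0..T} (\<lambda>n t. pic T M c n t x) (\<lambda>t. k t x) sequentially" for x
  proof -
    have W: "uniform_limit {0..T} (\<lambda>n t. \<Sum>i<n. dd i t x) (\<lambda>t. \<Sum>i. dd i t x) sequentially"
      by (rule Weierstrass_m_test[OF _ sm]) (use dm in auto)
    have "uniform_limit {0..T} (\<lambda>n t. c x + (\<Sum>i<n. dd i t x)) (\<lambda>t. c x + (\<Sum>i. dd i t x)) sequentially"
      by (intro uniform_limit_intros W)
    then show ?thesis unfolding k_def pic_tele .
  qed
  have sumd: "summable (\<lambda>i. dd i t x)" if "t \<in> {0..T}" for t x
    by (rule summable_comparison_test[OF _ sm]) (use dm that in auto)
  have kT: "k T x = c x" for x
    unfolding k_def dd_def pic_T by simp
  have kpos: "k t x > 0" if "t \<in> {0..T}" for t x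
  proof -
    have "0 \<le> (\<Sum>i. dd i t x)" by (rule suminf_nonneg[OF sumd[OF that]]) (use dd_nonneg that in auto)
    then show ?thesis unfolding k_def using cpos[rule_format, of x] by (simp add: add_pos_nonneg)
  qed
  have kder: "((\<lambda>s. k s x) has_real_derivative - (\<Sum>y\<in>UNIV. M t x y * k t y)) (at t within {0..T})"
    if t: "t \<in> {0..T}" for t x
  proof -
    have nle: "\<forall>\<^sub>F n in sequentially. \<forall>t\<in>{0..T}. \<forall>h. norm ((*) (- (\<Sum>y\<in>UNIV. M t x y * pic T M c n t y)) h
          - (*) (- (\<Sum>y\<in>UNIV. M t x y * k t y)) h) \<le> e * norm h" if e: "e > 0" for e
    proof -
      define e' where "e' = e / (NB + 1)"
      have e': "e' > 0" unfolding e'_def using e NB0 by simp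
      have "\<forall>\<^sub>F n in sequentially. \<forall>y. \<forall>t\<in>{0..T}. dist (pic T M c n t y) (k t y) < e'"
        by (rule eventually_all_finite) (rule uniform_limitD[OF U e'])
      then show ?thesis
      proof (rule eventually_mono, intro ballI allI)
        fix n t h
        assume a: "\<forall>y. \<forall>t\<in>{0..T}. dist (pic T M c n t y) (k t y) < e'" and t: "t \<in> {0..T}"
        have Ms: "\<forall>y. \<bar>M t x y\<bar> \<le> B" using B t by blast
        have ds: "\<forall>y. \<bar>pic T M c n t y - k t y\<bar> \<le> e'" using a t by (auto simp: dist_real_def less_imp_le)
        have "\<bar>(\<Sum>y\<in>UNIV. M t x y * pic T M c n t y) - (\<Sum>y\<in>UNIV. M t x y * k t y)\<bar>
            = \<bar>\<Sum>y\<in>UNIV. M t x y * (pic T M c n t y - k t y)\<bar>"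
          by (simp add: sum_subtractf right_diff_distrib)
        also have "\<dots> \<le> NB * e'" using sumbound[OF Ms ds] unfolding NB_def by simp
        also have "\<dots> \<le> e" unfolding e'_def using e NB0 by (simp add: field_simps)
        finally have le: "\<bar>(\<Sum>y\<in>UNIV. M t x y * pic T M c n t y) - (\<Sum>y\<in>UNIV. M t x y * k t y)\<bar> \<le> e" .
        have "norm ((- (\<Sum>y\<in>UNIV. M t x y * pic T M c n t y)) * h - (- (\<Sum>y\<in>UNIV. M t x y * k t y)) * h)
           = \<bar>(\<Sum>y\<in>UNIV. M t x y * pic T M c n t y) - (\<Sum>y\<in>UNIV. M t x y * k t y)\<bar> * norm h"
          by (simp add: abs_mult[symmetric] left_diff_distrib[symmetric]) (simp add: abs_mult abs_minus_commute)
        also have "\<dots> \<le> e * norm h" by (rule mult_right_mono[OF le]) simp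
        finally show "norm ((*) (- (\<Sum>y\<in>UNIV. M t x y * pic T M c n t y)) h
          - (*) (- (\<Sum>y\<in>UNIV. M t x y * k t y)) h) \<le> e * norm h" by simp
      qed
    qed
    have "\<exists>g. \<forall>t\<in>{0..T}. (\<lambda>n. pic T M c (Suc n) t x) \<longlonglongrightarrow> g t \<and>
        (g has_derivative (*) (- (\<Sum>y\<in>UNIV. M t x y * k t y))) (at t within {0..T})"
    proof (rule has_derivative_sequence[where l="c x" and f'="\<lambda>n t. (*) (- (\<Sum>y\<in>UNIV. M t x y * pic T M c n t y))"])
      show "convex {0..T}" by simp
      show "T \<in> {0..T}" using T0 by simp
      show "(\<lambda>n. pic T M c (Suc n) T x) \<longlonglongrightarrow> c x" by (simp add: pic_T)
      fix n t assume "t \<in> {0..T}"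
      then show "((\<lambda>t. pic T M c (Suc n) t x) has_derivative (*) (- (\<Sum>y\<in>UNIV. M t x y * pic T M c n t y))) (at t within {0..T})"
        unfolding has_field_derivative_def[symmetric] by (rule pic_deriv)
    next
      fix e :: real assume "e > 0"
      then show "\<forall>\<^sub>F n in sequentially. \<forall>t\<in>{0..T}. \<forall>h. norm ((*) (- (\<Sum>y\<in>UNIV. M t x y * pic T M c n t y)) h
          - (*) (- (\<Sum>y\<in>UNIV. M t x y * k t y)) h) \<le> e * norm h" by (rule nle)
    qed
    then obtain g where g: "\<forall>t\<in>{0..T}. (\<lambda>n. pic T M c (Suc n) t x) \<longlonglongrightarrow> g t \<and>
        (g has_derivative (*) (- (\<Sum>y\<in>UNIV. M t x y * k t y))) (at t within {0..T})" by blast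
    have gk: "g s = k s x" if "s \<in> {0..T}" for s
    proof -
      have "(\<lambda>n. pic T M c n s x) \<longlonglongrightarrow> k s x" by (rule tendsto_uniform_limitI[OF U that])
      then have "(\<lambda>n. pic T M c (Suc n) s x) \<longlonglongrightarrow> k s x" by (rule LIMSEQ_Suc)
      then show ?thesis using g that LIMSEQ_unique by blast
    qed
    have "(g has_real_derivative - (\<Sum>y\<in>UNIV. M t x y * k t y)) (at t within {0..T})"
      using g t by (simp add: has_field_derivative_def)
    then show ?thesis
      by (rule has_field_derivative_transform_within[where d=1]) (use t gk in auto)
  qed
  show ?thesis using kT kpos kder by blast
qed

end

lemma backward_ode:
  fixes M :: "real \<Rightarrow> 'x::finite \<Rightarrow> 'x \<Rightarrow> real" and c :: "'x \<Rightarrow> real"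
  assumes "0 \<le> T" "\<forall>x y. continuous_on {0..T} (\<lambda>t. M t x y)"
    "\<forall>t\<in>{0..T}. \<forall>x y. 0 \<le> M t x y" "\<forall>x. 0 < c x"
  shows "\<exists>k. (\<forall>x. k T x = c x) \<and> (\<forall>t\<in>{0..T}. \<forall>x. k t x > 0) \<and>
     (\<forall>t\<in>{0..T}. \<forall>x. ((\<lambda>s. k s x) has_real_derivative - (\<Sum>y\<in>UNIV. M t x y * k t y)) (at t within {0..T}))"
  using backward_ode_ctx[OF assms] .




lemma sum_rem: "(\<Sum>y\<in>UNIV. f y) = f x + (\<Sum>y\<in>UNIV - {x}. f (y::'x::finite))"
  by (simp add: sum.remove)

lemma gen_off: "is_generator T Q \<Longrightarrow> t \<in> {0..T} \<Longrightarrow> x \<noteq> y \<Longrightarrow> 0 \<le> Q t x y"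
  unfolding is_generator_def by blast

lemma gen_cont: "is_generator T Q \<Longrightarrow> continuous_on {0..T} (\<lambda>t. Q t x y)"
  unfolding is_generator_def by blast

lemma gen_bound: "is_generator T Q \<Longrightarrow> \<exists>B. \<forall>t\<in>{0..T}. \<forall>x y. \<bar>Q t x y\<bar> \<le> B"
  by (rule cont_bound) (use gen_cont in blast)

lemma offsum_bound:
  fixes f :: "'x::finite \<Rightarrow> real"
  assumes "\<forall>y. \<bar>f y\<bar> \<le> B"
  shows "\<bar>\<Sum>y\<in>UNIV - {x}. f y\<bar> \<le> real CARD('x) * B"
proof -
  have "\<bar>\<Sum>y\<in>UNIV - {x}. f y\<bar> \<le> (\<Sum>y\<in>UNIV - {x}. \<bar>f y\<bar>)" by (rule sum_abs)
  also have "\<dots> \<le> (\<Sum>y\<in>UNIV - {x}. B)" by (intro sum_mono) (use assms in auto)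
  also have "\<dots> = real (card (UNIV - {x} :: 'x set)) * B" by simp
  also have "\<dots> \<le> real CARD('x) * B"
  proof (rule mult_right_mono)
    show "real (card (UNIV - {x} :: 'x set)) \<le> real CARD('x)" by (simp add: card_Diff_subset)
    show "0 \<le> B" using assms[rule_format, of x] by simp
  qed
  finally show ?thesis .
qed

lemma fwd_nonneg:
  fixes Q :: "real \<Rightarrow> 'x::finite \<Rightarrow> 'x \<Rightarrow> real"
  assumes gen: "is_generator T Q" and fs: "forward_sol T Q (dirac x0) p" and T: "0 \<le> T"
  shows "\<forall>t\<in>{0..T}. \<forall>x. 0 \<le> p t x"
proof -
  obtain B where B: "\<forall>t\<in>{0..T}. \<forall>x y. \<bar>Q t x y\<bar> \<le> B" using gen_bound[OF gen] by blast
  have B0: "0 \<le> B" using B T by force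
  define C where "C t x y = (if y = x then - (\<Sum>z\<in>UNIV - {x}. Q t x z) else Q t y x)" for t x y
  show ?thesis
  proof (rule pos_lemma[where C=C and B="real CARD('x) * B"])
    show "0 \<le> T" by fact
    show "\<forall>t\<in>{0..T}. \<forall>x y. \<bar>C t x y\<bar> \<le> real CARD('x) * B"
    proof (intro ballI allI)
      fix t x y assume t: "t \<in> {0..T}"
      show "\<bar>C t x y\<bar> \<le> real CARD('x) * B"
      proof (cases "y = x")
        case True
        then show ?thesis unfolding C_def using offsum_bound[of "Q t x" B x] B t by auto
      next
        case False
        have "B \<le> real CARD('x) * B" using B0 by (simp add: mult_le_cancel_right1)
        moreover have "\<bar>Q t y x\<bar> \<le> B" using B t by blast
        ultimately show ?thesis unfolding C_def using False by simp
      qed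
    qed
    show "\<forall>t\<in>{0..T}. \<forall>x y. x \<noteq> y \<longrightarrow> 0 \<le> C t x y"
      unfolding C_def using gen_off[OF gen] by auto
    show "\<forall>x. 0 \<le> p 0 x" using fs unfolding forward_sol_def dirac_def by auto
    show "\<forall>t\<in>{0..T}. \<forall>x. ((\<lambda>s. p s x) has_real_derivative (\<Sum>y\<in>UNIV. C t x y * p t y)) (at t within {0..T})"
    proof (intro ballI allI)
      fix t x assume t: "t \<in> {0..T}"
      have "(\<Sum>y\<in>UNIV. C t x y * p t y) = C t x x * p t x + (\<Sum>y\<in>UNIV - {x}. C t x y * p t y)"
        by (rule sum_rem)
      also have "\<dots> = (\<Sum>y\<in>UNIV - {x}. Q t y x * p t y) - (\<Sum>y\<in>UNIV - {x}. Q t x y * p t x)"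
        unfolding C_def by (simp add: sum_distrib_right)
      finally have e: "(\<Sum>y\<in>UNIV. C t x y * p t y) = \<dots>" .
      show "((\<lambda>s. p s x) has_real_derivative (\<Sum>y\<in>UNIV. C t x y * p t y)) (at t within {0..T})"
        unfolding e using fs t unfolding forward_sol_def by blast
    qed
  qed
qed

lemma h_exists:
  fixes Qpre :: "real \<Rightarrow> 'x::finite \<Rightarrow> 'x \<Rightarrow> real"
  assumes gen: "is_generator T Qpre" and T: "0 \<le> T"
  shows "\<exists>h. (\<forall>x. h T x = exp (g x)) \<and> (\<forall>t\<in>{0..T}. \<forall>x. h t x > 0) \<and>
     (\<forall>t\<in>{0..T}. \<forall>x. ((\<lambda>s. h s x) has_real_derivative - (\<Sum>y\<in>UNIV - {x}. Qpre t x y * (h t y - h t x))) (at t within {0..T}))"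
proof -
  obtain B where B: "\<forall>t\<in>{0..T}. \<forall>x y. \<bar>Qpre t x y\<bar> \<le> B" using gen_bound[OF gen] by blast
  define L where "L = real CARD('x) * B"
  define M where "M t x y = (if y = x then L - (\<Sum>z\<in>UNIV - {x}. Qpre t x z) else Qpre t x y)" for t x y
  have contM: "\<forall>x y. continuous_on {0..T} (\<lambda>t. M t x y)"
  proof (intro allI)
    fix x y
    show "continuous_on {0..T} (\<lambda>t. M t x y)"
    proof (cases "y = x")
      case True
      then show ?thesis unfolding M_def using gen_cont[OF gen] by (auto intro!: continuous_intros)
    next
      case False
      then show ?thesis unfolding M_def using gen_cont[OF gen] by auto
    qed
  qed
  have Mnn: "\<forall>t\<in>{0..T}. \<forall>x y. 0 \<le> M t x y"
  proof (intro ballI allI)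
    fix t x y assume t: "t \<in> {0..T}"
    show "0 \<le> M t x y"
    proof (cases "y = x")
      case True
      have "\<bar>\<Sum>z\<in>UNIV - {x}. Qpre t x z\<bar> \<le> L" unfolding L_def using offsum_bound[of "Qpre t x" B x] B t by auto
      then show ?thesis unfolding M_def using True by auto
    next
      case False
      then show ?thesis unfolding M_def using gen_off[OF gen t] by auto
    qed
  qed
  obtain k where kT: "\<forall>x. k T x = exp (g x)" and kpos: "\<forall>t\<in>{0..T}. \<forall>x. k t x > 0"
    and kder: "\<forall>t\<in>{0..T}. \<forall>x. ((\<lambda>s. k s x) has_real_derivative - (\<Sum>y\<in>UNIV. M t x y * k t y)) (at t within {0..T})"
    using backward_ode[OF T contM Mnn, of "\<lambda>x. exp (g x)"] by auto
  define h where "h t x = exp (- (L * (T - t))) * k t x" for t x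
  show ?thesis
  proof (intro exI conjI ballI allI)
    fix x show "h T x = exp (g x)" unfolding h_def using kT by simp
  next
    fix t x assume "t \<in> {0..T}" then show "h t x > 0" unfolding h_def using kpos by simp
  next
    fix t x assume t: "t \<in> {0..T}"
    have d: "((\<lambda>s. h s x) has_real_derivative exp (- (L * (T - t))) * L * k t x + exp (- (L * (T - t))) * (- (\<Sum>y\<in>UNIV. M t x y * k t y))) (at t within {0..T})"
      unfolding h_def using kder t
      by (auto intro!: derivative_eq_intros simp: algebra_simps)
    have "(\<Sum>y\<in>UNIV. M t x y * k t y) = M t x x * k t x + (\<Sum>y\<in>UNIV - {x}. M t x y * k t y)" by (rule sum_rem)
    also have "\<dots> = (L - (\<Sum>z\<in>UNIV - {x}. Qpre t x z)) * k t x + (\<Sum>y\<in>UNIV - {x}. Qpre t x y * k t y)"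
      unfolding M_def by simp
    finally have e1: "(\<Sum>y\<in>UNIV. M t x y * k t y) = \<dots>" .
    have e2: "(\<Sum>y\<in>UNIV - {x}. Qpre t x y * (h t y - h t x))
        = exp (- (L * (T - t))) * ((\<Sum>y\<in>UNIV - {x}. Qpre t x y * k t y) - (\<Sum>z\<in>UNIV - {x}. Qpre t x z) * k t x)"
      unfolding h_def by (simp add: algebra_simps sum_subtractf sum_distrib_left sum_distrib_right)
    show "((\<lambda>s. h s x) has_real_derivative - (\<Sum>y\<in>UNIV - {x}. Qpre t x y * (h t y - h t x))) (at t within {0..T})"
      using d unfolding e1 e2 by (simp add: algebra_simps)
  qed
qed




lemma F_deriv:
  fixes Q Qpre :: "real \<Rightarrow> 'x::finite \<Rightarrow> 'x \<Rightarrow> real"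
  assumes fs: "forward_sol T Q p0 p" and hpos: "\<forall>t\<in>{0..T}. \<forall>x. h t x > 0"
  and hder: "\<forall>t\<in>{0..T}. \<forall>x. ((\<lambda>s. h s x) has_real_derivative - (\<Sum>y\<in>UNIV - {x}. Qpre t x y * (h t y - h t x))) (at t within {0..T})"
  and t: "t \<in> {0..T}"
  shows "((\<lambda>s. \<Sum>x\<in>UNIV. p s x * ln (h s x)) has_real_derivative
     (\<Sum>x\<in>UNIV. p t x * (\<Sum>y\<in>UNIV - {x}. Q t x y * ln (h t y / h t x) - Qpre t x y * (h t y / h t x - 1))))
     (at t within {0..T})"
proof -
  define A where "A x = (\<Sum>y\<in>UNIV - {x}. Q t y x * p t y) - (\<Sum>y\<in>UNIV - {x}. Q t x y * p t x)" for x
  define H where "H x = - (\<Sum>y\<in>UNIV - {x}. Qpre t x y * (h t y - h t x))" for x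
  have dp: "((\<lambda>s. p s x) has_real_derivative A x) (at t within {0..T})" for x
    using fs t unfolding forward_sol_def A_def by blast
  have dh: "((\<lambda>s. h s x) has_real_derivative H x) (at t within {0..T})" for x
    using hder t unfolding H_def by blast
  have hp: "h t x > 0" for x using hpos t by blast
  have dl: "((\<lambda>s. ln (h s x)) has_real_derivative 1 / h t x * H x) (at t within {0..T})" for x
    by (rule DERIV_chain2[OF DERIV_ln_divide[OF hp] dh])
  have d: "((\<lambda>s. \<Sum>x\<in>UNIV. p s x * ln (h s x)) has_real_derivative
      (\<Sum>x\<in>UNIV. A x * ln (h t x) + 1 / h t x * H x * p t x)) (at t within {0..T})"
    by (rule DERIV_sum, rule DERIV_mult[OF dp dl])
  define lh where "lh y = ln (h t y)" for y
  have s1: "(\<Sum>x\<in>UNIV. \<Sum>y\<in>UNIV - {x}. Q t y x * p t y * lh x) = (\<Sum>x\<in>UNIV. \<Sum>y\<in>UNIV - {x}. Q t x y * p t x * lh y)"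
    by (rule sum_offdiag_swap)
  have s2: "(\<Sum>x\<in>UNIV. A x * lh x) = (\<Sum>x\<in>UNIV. \<Sum>y\<in>UNIV - {x}. Q t y x * p t y * lh x) - (\<Sum>x\<in>UNIV. \<Sum>y\<in>UNIV - {x}. Q t x y * p t x * lh x)"
    unfolding A_def by (simp add: sum_subtractf left_diff_distrib sum_distrib_right)
  have s3: "(\<Sum>x\<in>UNIV. A x * lh x) = (\<Sum>x\<in>UNIV. \<Sum>y\<in>UNIV - {x}. p t x * (Q t x y * (lh y - lh x)))"
    unfolding s2 s1 by (simp add: sum_subtractf[symmetric] algebra_simps)
  have s4: "1 / h t x * H x * p t x = - (\<Sum>y\<in>UNIV - {x}. p t x * (Qpre t x y * (h t y / h t x - 1)))" for x
  proof -
    have "(h t y - h t x) / h t x = h t y / h t x - 1" for y using hp[of x] by (simp add: field_simps)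
    have hx: "h t x \<noteq> 0" using hp[of x] by simp
    show ?thesis unfolding H_def
      by (simp add: sum_distrib_left sum_divide_distrib[symmetric] algebra_simps)
         (simp add: sum_divide_distrib sum_distrib_left field_simps hx)
  qed
  have lnd: "ln (h t y / h t x) = lh y - lh x" for x y unfolding lh_def using hp[of x] hp[of y] by (simp add: ln_div)
  have "(\<Sum>x\<in>UNIV. A x * ln (h t x) + 1 / h t x * H x * p t x)
      = (\<Sum>x\<in>UNIV. A x * lh x) + (\<Sum>x\<in>UNIV. 1 / h t x * H x * p t x)"
    unfolding lh_def by (simp add: sum.distrib)
  also have "\<dots> = (\<Sum>x\<in>UNIV. p t x * (\<Sum>y\<in>UNIV - {x}. Q t x y * ln (h t y / h t x) - Qpre t x y * (h t y / h t x - 1)))"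
    unfolding s3 s4 lnd by (simp add: sum_subtractf right_diff_distrib sum_distrib_left sum.distrib[symmetric] sum_negf[symmetric])
  finally show ?thesis using d by simp
qed




lemma conserv:
  fixes Qpre :: "real \<Rightarrow> 'x::finite \<Rightarrow> 'x \<Rightarrow> real"
  assumes fs: "forward_sol T Qpre p0 p"
  and hder: "\<forall>t\<in>{0..T}. \<forall>x. ((\<lambda>s. h s x) has_real_derivative - (\<Sum>y\<in>UNIV - {x}. Qpre t x y * (h t y - h t x))) (at t within {0..T})"
  and T: "0 \<le> T"
  shows "(\<Sum>x\<in>UNIV. p T x * h T x) = (\<Sum>x\<in>UNIV. p 0 x * h 0 x)"
proof -
  have d0: "((\<lambda>s. \<Sum>x\<in>UNIV. p s x * h s x) has_real_derivative 0) (at t within {0..T})" if t: "t \<in> {0..T}" for t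
  proof -
    define A where "A x = (\<Sum>y\<in>UNIV - {x}. Qpre t y x * p t y) - (\<Sum>y\<in>UNIV - {x}. Qpre t x y * p t x)" for x
    define H where "H x = - (\<Sum>y\<in>UNIV - {x}. Qpre t x y * (h t y - h t x))" for x
    have dp: "((\<lambda>s. p s x) has_real_derivative A x) (at t within {0..T})" for x
      using fs t unfolding forward_sol_def A_def by blast
    have dh: "((\<lambda>s. h s x) has_real_derivative H x) (at t within {0..T})" for x
      using hder t unfolding H_def by blast
    have d: "((\<lambda>s. \<Sum>x\<in>UNIV. p s x * h s x) has_real_derivative
      (\<Sum>x\<in>UNIV. A x * h t x + H x * p t x)) (at t within {0..T})"
      by (rule DERIV_sum, rule DERIV_mult[OF dp dh])
    have s1: "(\<Sum>x\<in>UNIV. \<Sum>y\<in>UNIV - {x}. Qpre t y x * p t y * h t x) = (\<Sum>x\<in>UNIV. \<Sum>y\<in>UNIV - {x}. Qpre t x y * p t x * h t y)"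
      by (rule sum_offdiag_swap)
    have "(\<Sum>x\<in>UNIV. A x * h t x + H x * p t x)
        = (\<Sum>x\<in>UNIV. \<Sum>y\<in>UNIV - {x}. Qpre t y x * p t y * h t x) - (\<Sum>x\<in>UNIV. \<Sum>y\<in>UNIV - {x}. Qpre t x y * p t x * h t y)"
      unfolding A_def H_def
      by (simp add: sum.distrib sum_subtractf left_diff_distrib right_diff_distrib sum_distrib_right sum_distrib_left algebra_simps)
    also have "\<dots> = 0" unfolding s1 by simp
    finally show ?thesis using d by simp
  qed
  obtain C where "\<forall>s\<in>{0..T}. (\<Sum>x\<in>UNIV. p s x * h s x) = C"
    using has_field_derivative_zero_constant[of "{0..T}" "\<lambda>s. \<Sum>x\<in>UNIV. p s x * h s x"] d0 by auto
  then show ?thesis using T by auto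
qed

lemma nn_int_cont:
  fixes f :: "real \<Rightarrow> real"
  assumes "continuous_on {0..T} f" "\<forall>t\<in>{0..T}. 0 \<le> f t" "(f has_integral I) {0..T}"
  shows "(\<integral>\<^sup>+ t\<in>{0..T}. ennreal (f t) \<partial>lborel) = ennreal I"
proof -
  define g where "g t = indicator {0..T} t * f t" for t
  have e: "ennreal (f t) * indicator {0..T} t = ennreal (g t)" for t
    unfolding g_def by (auto simp: indicator_def)
  have "integral\<^sup>N lborel g = I"
  proof (rule nn_integral_has_integral_lborel)
    show "g \<in> borel_measurable borel"
      unfolding g_def using borel_measurable_continuous_on_indicator[OF _ assms(1)] by simp
    show "0 \<le> g x" for x unfolding g_def using assms(2) by (auto simp: indicator_def)
    have "g = (\<lambda>t. if t \<in> {0..T} then f t else 0)" unfolding g_def by (auto simp: indicator_def)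
    then show "(g has_integral I) UNIV" using assms(3) has_integral_restrict_UNIV by metis
  qed
  then show ?thesis unfolding e by simp
qed

lemma kl_ge:
  assumes a: "0 \<le> a" and b: "0 \<le> b" and u: "0 < u"
  shows "ennreal (a * ln u - b * (u - 1)) \<le> kl_rate a b"
proof (cases "a = 0")
  case True
  have "- (b * (u - 1)) \<le> b" using b u by (simp add: algebra_simps mult_nonneg_nonneg)
  then show ?thesis using True b unfolding kl_rate_def by simp
next
  case False
  show ?thesis
  proof (cases "b = 0")
    case True then show ?thesis using False unfolding kl_rate_def by simp
  next
    case False': False
    have ap: "a > 0" using a False by simp
    have bp: "b > 0" using b False' by simp
    have "ln (b * u / a) \<le> b * u / a - 1" using ap bp u by (intro ln_le_minus_one) simp
    then have "a * ln (b * u / a) \<le> a * (b * u / a - 1)" using ap by (simp add: mult_left_mono)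
    also have "\<dots> = b * u - a" using ap by (simp add: field_simps)
    finally have i: "a * ln (b * u / a) \<le> b * u - a" .
    have "ln (b * u / a) = ln u - ln (a / b)" using ap bp u by (simp add: ln_div ln_mult)
    then have "a * ln u = a * (ln (a / b) + ln (b * u / a))" by simp
    then have "a * ln u = a * ln (a / b) + a * ln (b * u / a)" by (simp only: distrib_left)
    then have "a * ln u - b * (u - 1) \<le> b - a + a * ln (a / b)" using i by (simp add: algebra_simps)
    then show ?thesis using False False' unfolding kl_rate_def by (simp add: ennreal_leI)
  qed
qed

lemma ennreal_sum_le:
  fixes f :: "'a \<Rightarrow> real"
  shows "ennreal (\<Sum>i\<in>A. f i) \<le> (\<Sum>i\<in>A. ennreal (f i))"
proof (induction A rule: infinite_finite_induct)
  case (insert x F)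
  have "ennreal (f x + sum f F) \<le> ennreal (f x) + ennreal (sum f F)"
  proof (cases "0 \<le> f x \<and> 0 \<le> sum f F")
    case True then show ?thesis by simp
  next
    case False
    then show ?thesis
    proof (cases "f x < 0")
      case True
      then have "ennreal (f x + sum f F) \<le> ennreal (sum f F)" by (intro ennreal_leI) simp
      then show ?thesis by (simp add: add_increasing)
    next
      case False': False
      then have "sum f F < 0" using False by simp
      then have "ennreal (f x + sum f F) \<le> ennreal (f x)" by (intro ennreal_leI) simp
      then show ?thesis by (simp add: add_increasing2)
    qed
  qed
  also have "\<dots> \<le> ennreal (f x) + (\<Sum>i\<in>F. ennreal (f i))" using insert.IH by (simp add: add_left_mono)
  finally show ?case using insert by simp
qed auto




lemma ennreal_pt:
  fixes p :: "'x::finite \<Rightarrow> real" and a b u :: "'x \<Rightarrow> 'x \<Rightarrow> real"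
  assumes "\<forall>x. 0 \<le> p x" "\<forall>x y. x \<noteq> y \<longrightarrow> 0 \<le> a x y" "\<forall>x y. x \<noteq> y \<longrightarrow> 0 \<le> b x y" "\<forall>x y. 0 < u x y"
  shows "ennreal (\<Sum>x\<in>UNIV. p x * (\<Sum>y\<in>UNIV - {x}. a x y * ln (u x y) - b x y * (u x y - 1)))
     \<le> (\<Sum>x\<in>UNIV. ennreal (p x) * (\<Sum>y\<in>UNIV - {x}. kl_rate (a x y) (b x y)))"
proof -
  have "ennreal (\<Sum>x\<in>UNIV. p x * (\<Sum>y\<in>UNIV - {x}. a x y * ln (u x y) - b x y * (u x y - 1)))
      \<le> (\<Sum>x\<in>UNIV. ennreal (p x * (\<Sum>y\<in>UNIV - {x}. a x y * ln (u x y) - b x y * (u x y - 1))))"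
    by (rule ennreal_sum_le)
  also have "\<dots> \<le> (\<Sum>x\<in>UNIV. ennreal (p x) * (\<Sum>y\<in>UNIV - {x}. kl_rate (a x y) (b x y)))"
  proof (rule sum_mono)
    fix x :: 'x
    have "ennreal (p x * (\<Sum>y\<in>UNIV - {x}. a x y * ln (u x y) - b x y * (u x y - 1)))
        = ennreal (p x) * ennreal (\<Sum>y\<in>UNIV - {x}. a x y * ln (u x y) - b x y * (u x y - 1))"
      using assms(1) by (simp add: ennreal_mult')
    also have "\<dots> \<le> ennreal (p x) * (\<Sum>y\<in>UNIV - {x}. ennreal (a x y * ln (u x y) - b x y * (u x y - 1)))"
      by (intro mult_left_mono ennreal_sum_le) simp
    also have "\<dots> \<le> ennreal (p x) * (\<Sum>y\<in>UNIV - {x}. kl_rate (a x y) (b x y))"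
      by (intro mult_left_mono sum_mono kl_ge) (use assms in auto)
    finally show "ennreal (p x * (\<Sum>y\<in>UNIV - {x}. a x y * ln (u x y) - b x y * (u x y - 1)))
        \<le> ennreal (p x) * (\<Sum>y\<in>UNIV - {x}. kl_rate (a x y) (b x y))" .
  qed
  finally show ?thesis .
qed

lemma upper:
  fixes Q Qpre :: "real \<Rightarrow> 'x::finite \<Rightarrow> 'x \<Rightarrow> real"
  assumes T: "0 \<le> T" and genpre: "is_generator T Qpre" and gen: "is_generator T Q"
  and fs: "forward_sol T Q (dirac x0) p"
  and hpos: "\<forall>t\<in>{0..T}. \<forall>x. h t x > 0"
  and hder: "\<forall>t\<in>{0..T}. \<forall>x. ((\<lambda>s. h s x) has_real_derivative - (\<Sum>y\<in>UNIV - {x}. Qpre t x y * (h t y - h t x))) (at t within {0..T})"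
  and hT: "\<forall>x. h T x = exp (g x)"
  and K: "path_kl T Qpre Q p = ennreal K" and K0: "0 \<le> K"
  shows "(\<Sum>x\<in>UNIV. p T x * g x) - ln (h 0 x0) \<le> K"
proof -
  define F' where "F' t = (\<Sum>x\<in>UNIV. p t x * (\<Sum>y\<in>UNIV - {x}. Q t x y * ln (h t y / h t x) - Qpre t x y * (h t y / h t x - 1)))" for t
  define F where "F s = (\<Sum>x\<in>UNIV. p s x * ln (h s x))" for s
  have pnn: "\<forall>t\<in>{0..T}. \<forall>x. 0 \<le> p t x" by (rule fwd_nonneg[OF gen fs T])
  have dF: "(F has_real_derivative F' t) (at t within {0..T})" if "t \<in> {0..T}" for t
    unfolding F_def F'_def by (rule F_deriv[OF fs hpos hder that])
  have FTC: "(F' has_integral (F T - F 0)) {0..T}"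
    by (rule fundamental_theorem_of_calculus[OF T]) (use dF in \<open>auto simp: has_real_derivative_iff_has_vector_derivative\<close>)
  have FT: "F T = (\<Sum>x\<in>UNIV. p T x * g x)" unfolding F_def using hT by simp
  have p0: "p 0 = dirac x0" using fs unfolding forward_sol_def by blast
  have F0: "F 0 = ln (h 0 x0)"
  proof -
    have "F 0 = (\<Sum>x\<in>UNIV. if x = x0 then ln (h 0 x) else 0)"
      unfolding F_def p0 dirac_def by (intro sum.cong) auto
    then show ?thesis by simp
  qed
  have contp: "continuous_on {0..T} (\<lambda>s. p s x)" for x
    by (rule DERIV_continuous_on[where D="\<lambda>t. (\<Sum>y\<in>UNIV - {x}. Q t y x * p t y) - (\<Sum>y\<in>UNIV - {x}. Q t x y * p t x)"])
       (use fs in \<open>auto simp: forward_sol_def\<close>)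
  have conth: "continuous_on {0..T} (\<lambda>s. h s x)" for x
    by (rule DERIV_continuous_on) (use hder in blast)
  have hposx: "h t x \<noteq> 0" if "0 \<le> t" "t \<le> T" for t x proof -
    have "t \<in> {0..T}" using that by simp
    then have "h t x > 0" using hpos by blast
    then show ?thesis by simp
  qed
  have contF': "continuous_on {0..T} F'"
    unfolding F'_def
    by (intro continuous_intros contp conth gen_cont[OF gen] gen_cont[OF genpre])
       (use hposx in \<open>auto simp: divide_pos_pos\<close>)
  define Fp where "Fp t = max (F' t) 0" for t
  have contFp: "continuous_on {0..T} Fp" unfolding Fp_def by (intro continuous_intros contF')
  obtain Ip where Ip: "(Fp has_integral Ip) {0..T}"
    using integrable_continuous_interval[OF contFp] by blast
  have le1: "F T - F 0 \<le> Ip"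
    by (rule has_integral_le[OF FTC Ip]) (simp add: Fp_def)
  have nn: "(\<integral>\<^sup>+ t\<in>{0..T}. ennreal (Fp t) \<partial>lborel) = ennreal Ip"
    by (rule nn_int_cont[OF contFp _ Ip]) (simp add: Fp_def)
  have "(\<integral>\<^sup>+ t\<in>{0..T}. ennreal (Fp t) \<partial>lborel) \<le> path_kl T Qpre Q p"
    unfolding path_kl_def
  proof (rule nn_integral_mono)
    fix t
    show "ennreal (Fp t) * indicator {0..T} t \<le>
       (\<Sum>x\<in>UNIV. ennreal (p t x) * (\<Sum>y\<in>UNIV - {x}. kl_rate (Q t x y) (Qpre t x y))) * indicator {0..T} t"
    proof (cases "t \<in> {0..T}")
      case True
      have "ennreal (Fp t) = ennreal (F' t)" unfolding Fp_def by (metis ennreal_max_0 max.commute)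
      also have "\<dots> \<le> (\<Sum>x\<in>UNIV. ennreal (p t x) * (\<Sum>y\<in>UNIV - {x}. kl_rate (Q t x y) (Qpre t x y)))"
        unfolding F'_def
        by (rule ennreal_pt[where u="\<lambda>x y. h t y / h t x"])
           (use True pnn gen_off[OF gen] gen_off[OF genpre] hpos in auto)
      finally show ?thesis using True by simp
    qed simp
  qed
  then have "ennreal Ip \<le> ennreal K" unfolding nn K .
  then have "Ip \<le> K" using K0 by simp
  then show ?thesis using le1 FT F0 by simp
qed




lemma F'_cont:
  fixes Q Qpre :: "real \<Rightarrow> 'x::finite \<Rightarrow> 'x \<Rightarrow> real"
  assumes genpre: "is_generator T Qpre" and gen: "is_generator T Q"
  and fs: "forward_sol T Q p0 p"
  and hpos: "\<forall>t\<in>{0..T}. \<forall>x. h t x > 0"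
  and hder: "\<forall>t\<in>{0..T}. \<forall>x. ((\<lambda>s. h s x) has_real_derivative - (\<Sum>y\<in>UNIV - {x}. Qpre t x y * (h t y - h t x))) (at t within {0..T})"
  shows "continuous_on {0..T} (\<lambda>t. \<Sum>x\<in>UNIV. p t x * (\<Sum>y\<in>UNIV - {x}. Q t x y * ln (h t y / h t x) - Qpre t x y * (h t y / h t x - 1)))"
proof -
  have contp: "continuous_on {0..T} (\<lambda>s. p s x)" for x
    by (rule DERIV_continuous_on[where D="\<lambda>t. (\<Sum>y\<in>UNIV - {x}. Q t y x * p t y) - (\<Sum>y\<in>UNIV - {x}. Q t x y * p t x)"])
       (use fs in \<open>auto simp: forward_sol_def\<close>)
  have conth: "continuous_on {0..T} (\<lambda>s. h s x)" for x
    by (rule DERIV_continuous_on) (use hder in blast)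
  have hposx: "h t x \<noteq> 0" if "0 \<le> t" "t \<le> T" for t x
  proof -
    have "t \<in> {0..T}" using that by simp
    then have "h t x > 0" using hpos by blast
    then show ?thesis by simp
  qed
  show ?thesis
    by (intro continuous_intros contp conth gen_cont[OF gen] gen_cont[OF genpre])
       (use hposx in \<open>auto simp: divide_pos_pos\<close>)
qed

lemma ulnu: "0 < u \<Longrightarrow> 0 \<le> u * ln u - u + (1::real)"
proof -
  assume u: "0 < u"
  have "ln (1 / u) \<le> 1 / u - 1" using u by (intro ln_le_minus_one) simp
  then have "- ln u \<le> 1 / u - 1" using u by (simp add: ln_div)
  then have "u * (- ln u) \<le> u * (1 / u - 1)" by (rule mult_left_mono) (use u in simp)
  moreover have "u * (1 / u - 1) = 1 - u" using u by (simp add: field_simps)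
  ultimately have "- (u * ln u) \<le> 1 - u" by simp
  then show ?thesis by linarith
qed

lemma kl_eq:
  assumes b: "0 \<le> b" and u: "0 < u"
  shows "kl_rate (b * u) b = ennreal (b * u * ln u - b * (u - 1))" "0 \<le> b * u * ln u - b * (u - 1)"
proof -
  have e: "b * u * ln u - b * (u - 1) = b * (u * ln u - u + 1)" by (simp add: algebra_simps)
  show "0 \<le> b * u * ln u - b * (u - 1)" unfolding e using b ulnu[OF u] by simp
  show "kl_rate (b * u) b = ennreal (b * u * ln u - b * (u - 1))"
  proof (cases "b = 0")
    case True then show ?thesis unfolding kl_rate_def by simp
  next
    case False
    then have "b * u \<noteq> 0" using u by simp
    moreover have "b * u / b = u" using False by simp
    ultimately show ?thesis using False unfolding kl_rate_def by (simp add: algebra_simps)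
  qed
qed

lemma lower:
  fixes Qpre :: "real \<Rightarrow> 'x::finite \<Rightarrow> 'x \<Rightarrow> real" and x0 :: 'x
  assumes T: "0 \<le> T" and genpre: "is_generator T Qpre"
  and fspre: "forward_sol T Qpre (dirac x0) ppre"
  and hpos: "\<forall>t\<in>{0..T}. \<forall>x. h t x > 0"
  and hder: "\<forall>t\<in>{0..T}. \<forall>x. ((\<lambda>s. h s x) has_real_derivative - (\<Sum>y\<in>UNIV - {x}. Qpre t x y * (h t y - h t x))) (at t within {0..T})"
  and hT: "\<forall>x. h T x = exp (g x)"
  shows "\<exists>Q p. is_generator T Q \<and> forward_sol T Q (dirac x0) p \<and>
    (\<forall>x. p T x = ppre T x * exp (g x) / h 0 x0) \<and>
    path_kl T Qpre Q p = ennreal ((\<Sum>x\<in>UNIV. p T x * g x) - ln (h 0 x0)) \<and>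
    0 \<le> (\<Sum>x\<in>UNIV. p T x * g x) - ln (h 0 x0)"
proof -
  have hp: "h t x > 0" if "t \<in> {0..T}" for t x using hpos that by blast
  define Z where "Z = h 0 x0"
  have Z: "Z > 0" unfolding Z_def using hp T by simp
  define Qs where "Qs t x y = (if y = x then - (\<Sum>z\<in>UNIV - {x}. Qpre t x z * h t z / h t x) else Qpre t x y * h t y / h t x)" for t x y
  define ps where "ps t x = ppre t x * h t x / Z" for t x
  have conth: "continuous_on {0..T} (\<lambda>s. h s x)" for x
    by (rule DERIV_continuous_on) (use hder in blast)
  have hposx: "h t x \<noteq> 0" if "0 \<le> t" "t \<le> T" for t x
  proof -
    have "t \<in> {0..T}" using that by simp
    then have "h t x > 0" using hpos by blast
    then show ?thesis by simp
  qed
  have gen: "is_generator T Qs"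
    unfolding is_generator_def
  proof (intro conjI ballI allI impI)
    fix t and x y :: 'x assume t: "t \<in> {0..T}" and "x \<noteq> y"
    then show "0 \<le> Qs t x y" unfolding Qs_def using gen_off[OF genpre t] hp[OF t]
      by (auto intro!: divide_nonneg_pos mult_nonneg_nonneg less_imp_le[OF hp[OF t]])
  next
    fix t and x :: 'x assume t: "t \<in> {0..T}"
    show "Qs t x x = - (\<Sum>y\<in>UNIV - {x}. Qs t x y)"
    proof -
      have "(\<Sum>y\<in>UNIV - {x}. Qs t x y) = (\<Sum>z\<in>UNIV - {x}. Qpre t x z * h t z / h t x)"
        unfolding Qs_def by (rule sum.cong) auto
      then show ?thesis unfolding Qs_def by simp
    qed
  next
    fix x y :: 'x
    show "continuous_on {0..T} (\<lambda>t. Qs t x y)"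
    proof (cases "y = x")
      case True
      then show ?thesis unfolding Qs_def
        by (simp, intro continuous_intros conth gen_cont[OF genpre]) (use hposx in auto)
    next
      case False
      then show ?thesis unfolding Qs_def
        by (simp, intro continuous_intros conth gen_cont[OF genpre]) (use hposx in auto)
    qed
  qed
  have pre0: "ppre 0 = dirac x0" using fspre unfolding forward_sol_def by blast
  have fs: "forward_sol T Qs (dirac x0) ps"
    unfolding forward_sol_def
  proof (intro conjI ballI allI)
    show "ps 0 = dirac x0" unfolding ps_def pre0 Z_def using Z unfolding Z_def
      by (auto simp: dirac_def fun_eq_iff)
  next
    fix t and x :: 'x assume t: "t \<in> {0..T}"
    define A where "A = (\<Sum>y\<in>UNIV - {x}. Qpre t y x * ppre t y) - (\<Sum>y\<in>UNIV - {x}. Qpre t x y * ppre t x)"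
    define H where "H = - (\<Sum>y\<in>UNIV - {x}. Qpre t x y * (h t y - h t x))"
    have dp: "((\<lambda>s. ppre s x) has_real_derivative A) (at t within {0..T})"
      using fspre t unfolding forward_sol_def A_def by blast
    have dh: "((\<lambda>s. h s x) has_real_derivative H) (at t within {0..T})"
      using hder t unfolding H_def by blast
    have d: "((\<lambda>s. ps s x) has_real_derivative (A * h t x + H * ppre t x) / Z) (at t within {0..T})"
      unfolding ps_def by (intro DERIV_cdivide DERIV_mult dp dh)
    have e1: "(\<Sum>y\<in>UNIV - {x}. Qs t y x * ps t y) = (\<Sum>y\<in>UNIV - {x}. Qpre t y x * ppre t y) * h t x / Z"
      unfolding sum_distrib_right sum_divide_distrib
    proof (rule sum.cong)
      fix y assume "y \<in> UNIV - {x}"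
      then show "Qs t y x * ps t y = Qpre t y x * ppre t y * h t x / Z"
        unfolding Qs_def ps_def using hp[OF t, of y] by (auto simp: field_simps)
    qed simp
    have e2: "(\<Sum>y\<in>UNIV - {x}. Qs t x y * ps t x) = (\<Sum>y\<in>UNIV - {x}. Qpre t x y * h t y) * ppre t x / Z"
      unfolding sum_distrib_right sum_divide_distrib
    proof (rule sum.cong)
      fix y assume "y \<in> UNIV - {x}"
      then show "Qs t x y * ps t x = Qpre t x y * h t y * ppre t x / Z"
        unfolding Qs_def ps_def using hp[OF t, of x] by (auto simp: field_simps)
    qed simp
    have e3: "(A * h t x + H * ppre t x) / Z
        = (\<Sum>y\<in>UNIV - {x}. Qpre t y x * ppre t y) * h t x / Z - (\<Sum>y\<in>UNIV - {x}. Qpre t x y * h t y) * ppre t x / Z"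
      unfolding A_def H_def
      by (simp add: sum_subtractf right_diff_distrib sum_distrib_right sum_distrib_left algebra_simps diff_divide_distrib add_divide_distrib)
    show "((\<lambda>s. ps s x) has_real_derivative (\<Sum>y\<in>UNIV - {x}. Qs t y x * ps t y) - (\<Sum>y\<in>UNIV - {x}. Qs t x y * ps t x)) (at t within {0..T})"
      using d unfolding e1 e2 e3 .
  qed
  have prenn: "\<forall>t\<in>{0..T}. \<forall>x. 0 \<le> ppre t x" by (rule fwd_nonneg[OF genpre fspre T])
  have psnn: "0 \<le> ps t x" if "t \<in> {0..T}" for t x
    unfolding ps_def using prenn that hp[OF that, of x] Z by (simp add: divide_nonneg_pos)
  define F' where "F' t = (\<Sum>x\<in>UNIV. ps t x * (\<Sum>y\<in>UNIV - {x}. Qs t x y * ln (h t y / h t x) - Qpre t x y * (h t y / h t x - 1)))" for t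
  define F where "F s = (\<Sum>x\<in>UNIV. ps s x * ln (h s x))" for s
  have dF: "(F has_real_derivative F' t) (at t within {0..T})" if "t \<in> {0..T}" for t
    unfolding F_def F'_def by (rule F_deriv[OF fs hpos hder that])
  have FTC: "(F' has_integral (F T - F 0)) {0..T}"
    by (rule fundamental_theorem_of_calculus[OF T]) (use dF in \<open>auto simp: has_real_derivative_iff_has_vector_derivative\<close>)
  have FT: "F T = (\<Sum>x\<in>UNIV. ps T x * g x)" unfolding F_def using hT by simp
  have ps0: "ps 0 = dirac x0" using fs unfolding forward_sol_def by blast
  have F0: "F 0 = ln (h 0 x0)"
  proof -
    have "F 0 = (\<Sum>x\<in>UNIV. if x = x0 then ln (h 0 x) else 0)"
      unfolding F_def ps0 dirac_def by (intro sum.cong) auto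
    then show ?thesis by simp
  qed
  have Rprops: "kl_rate (Qs t x y) (Qpre t x y) = ennreal (Qs t x y * ln (h t y / h t x) - Qpre t x y * (h t y / h t x - 1))
       \<and> 0 \<le> Qs t x y * ln (h t y / h t x) - Qpre t x y * (h t y / h t x - 1)"
    if t: "t \<in> {0..T}" and xy: "y \<in> UNIV - {x}" for t x y
  proof -
    have u: "0 < h t y / h t x" using hp[OF t] by (simp add: divide_pos_pos)
    have b: "0 \<le> Qpre t x y" using gen_off[OF genpre t] xy by auto
    have q: "Qs t x y = Qpre t x y * (h t y / h t x)" unfolding Qs_def using xy by auto
    show ?thesis unfolding q using kl_eq[OF b u] by simp
  qed
  have F'nn: "0 \<le> F' t" if t: "t \<in> {0..T}" for t
    unfolding F'_def using Rprops[OF t] psnn[OF t] by (intro sum_nonneg mult_nonneg_nonneg) auto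
  have Geq: "(\<Sum>x\<in>UNIV. ennreal (ps t x) * (\<Sum>y\<in>UNIV - {x}. kl_rate (Qs t x y) (Qpre t x y))) = ennreal (F' t)"
    if t: "t \<in> {0..T}" for t
  proof -
    have "(\<Sum>x\<in>UNIV. ennreal (ps t x) * (\<Sum>y\<in>UNIV - {x}. kl_rate (Qs t x y) (Qpre t x y)))
        = (\<Sum>x\<in>UNIV. ennreal (ps t x * (\<Sum>y\<in>UNIV - {x}. Qs t x y * ln (h t y / h t x) - Qpre t x y * (h t y / h t x - 1))))"
    proof (rule sum.cong)
      fix x :: 'x
      have "(\<Sum>y\<in>UNIV - {x}. kl_rate (Qs t x y) (Qpre t x y))
          = (\<Sum>y\<in>UNIV - {x}. ennreal (Qs t x y * ln (h t y / h t x) - Qpre t x y * (h t y / h t x - 1)))"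
        using Rprops[OF t] by (intro sum.cong) auto
      also have "\<dots> = ennreal (\<Sum>y\<in>UNIV - {x}. Qs t x y * ln (h t y / h t x) - Qpre t x y * (h t y / h t x - 1))"
        using Rprops[OF t] by (intro sum_ennreal) auto
      finally show "ennreal (ps t x) * (\<Sum>y\<in>UNIV - {x}. kl_rate (Qs t x y) (Qpre t x y))
          = ennreal (ps t x * (\<Sum>y\<in>UNIV - {x}. Qs t x y * ln (h t y / h t x) - Qpre t x y * (h t y / h t x - 1)))"
        using psnn[OF t, of x] by (simp add: ennreal_mult')
    qed simp
    also have "\<dots> = ennreal (F' t)" unfolding F'_def
      using Rprops[OF t] psnn[OF t] by (intro sum_ennreal mult_nonneg_nonneg sum_nonneg) auto
    finally show ?thesis .
  qed
  have contF': "continuous_on {0..T} F'"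
    unfolding F'_def by (rule F'_cont[OF genpre gen fs hpos hder])
  have "path_kl T Qpre Qs ps = (\<integral>\<^sup>+ t\<in>{0..T}. ennreal (F' t) \<partial>lborel)"
    unfolding path_kl_def
    by (rule nn_integral_cong) (auto simp: Geq indicator_def)
  also have "\<dots> = ennreal (F T - F 0)"
    by (rule nn_int_cont[OF contF' _ FTC]) (use F'nn in auto)
  finally have kl: "path_kl T Qpre Qs ps = ennreal (F T - F 0)" .
  have nn: "0 \<le> F T - F 0" by (rule has_integral_nonneg[OF FTC]) (use F'nn in auto)
  have psT: "\<forall>x. ps T x = ppre T x * exp (g x) / h 0 x0" unfolding ps_def Z_def using hT by simp
  show ?thesis
    by (rule exI[of _ Qs], rule exI[of _ ps]) (use gen fs psT kl nn FT F0 in simp)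
qed




theorem theorem1:
  fixes T \<alpha> :: real
    and r :: "'x::finite \<Rightarrow> real"
    and x0 :: 'x
    and Qpre Qstar :: "real \<Rightarrow> 'x \<Rightarrow> 'x \<Rightarrow> real"
    and ppre pstar :: "real \<Rightarrow> 'x \<Rightarrow> real"
  assumes "T > 0" and "\<alpha> > 0"
    and "is_generator T Qpre"
    and "forward_sol T Qpre (dirac x0) ppre"
    and "is_generator T Qstar"
    and "forward_sol T Qstar (dirac x0) pstar"
    and opt: "\<And>Q p. is_generator T Q \<Longrightarrow> forward_sol T Q (dirac x0) p \<Longrightarrow>
              J_obj T \<alpha> r Qpre Q p \<le> J_obj T \<alpha> r Qpre Qstar pstar"
  shows "\<exists>c::real. \<forall>x. pstar T x = c * exp (r x / \<alpha>) * ppre T x"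
proof -
  note genpre = assms(3) and fspre = assms(4) and gens = assms(5) and fss = assms(6)
  have T0: "0 \<le> T" using assms(1) by simp
  have al: "\<alpha> > 0" by fact
  have Zform: "h 0 x0 = (\<Sum>x\<in>UNIV. ppre T x * exp (g x))"
    if hder: "\<forall>t\<in>{0..T}. \<forall>x. ((\<lambda>s. h s x) has_real_derivative - (\<Sum>y\<in>UNIV - {x}. Qpre t x y * (h t y - h t x))) (at t within {0..T})"
    and hT: "\<forall>x. h T x = exp (g x)" for h g
  proof -
    have "(\<Sum>x\<in>UNIV. ppre T x * h T x) = (\<Sum>x\<in>UNIV. ppre 0 x * h 0 x)" by (rule conserv[OF fspre hder T0])
    also have "\<dots> = (\<Sum>x\<in>UNIV. if x = x0 then h 0 x else 0)"
      using fspre unfolding forward_sol_def dirac_def by (intro sum.cong) auto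
    also have "\<dots> = h 0 x0" by simp
    finally show ?thesis using hT by simp
  qed
  define g0 where "g0 x = r x / \<alpha>" for x
  obtain h where hT: "\<forall>x. h T x = exp (g0 x)" and hpos: "\<forall>t\<in>{0..T}. \<forall>x. h t x > 0"
    and hder: "\<forall>t\<in>{0..T}. \<forall>x. ((\<lambda>s. h s x) has_real_derivative - (\<Sum>y\<in>UNIV - {x}. Qpre t x y * (h t y - h t x))) (at t within {0..T})"
    using h_exists[OF genpre T0, of g0] by blast
  define Z where "Z = h 0 x0"
  have Zpos: "Z > 0" unfolding Z_def using hpos T0 by simp
  have Zeq: "Z = (\<Sum>x\<in>UNIV. ppre T x * exp (g0 x))" unfolding Z_def by (rule Zform[OF hder hT])
  obtain Q1 p1 where gen1: "is_generator T Q1" and fs1: "forward_sol T Q1 (dirac x0) p1"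
    and kl1: "path_kl T Qpre Q1 p1 = ennreal ((\<Sum>x\<in>UNIV. p1 T x * g0 x) - ln (h 0 x0))"
    and nn1: "0 \<le> (\<Sum>x\<in>UNIV. p1 T x * g0 x) - ln (h 0 x0)"
    using lower[OF T0 genpre fspre hpos hder hT] by blast
  have "\<alpha> * ((\<Sum>x\<in>UNIV. p1 T x * g0 x) - ln Z) = (\<Sum>x\<in>UNIV. p1 T x * r x) - \<alpha> * ln Z"
    unfolding g0_def using al by (simp add: right_diff_distrib sum_distrib_left)
  then have J1: "J_obj T \<alpha> r Qpre Q1 p1 = ereal (\<alpha> * ln Z)"
    unfolding J_obj_def kl1 using nn1 unfolding Z_def by simp
  have Jle: "ereal (\<alpha> * ln Z) \<le> J_obj T \<alpha> r Qpre Qstar pstar"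
    using opt[OF gen1 fs1] unfolding J1 .
  obtain K where K: "path_kl T Qpre Qstar pstar = ennreal K" and K0: "0 \<le> K"
  proof (cases "path_kl T Qpre Qstar pstar" rule: ennreal_cases)
    case (real K) then show ?thesis using that by blast
  next
    case top
    then have "J_obj T \<alpha> r Qpre Qstar pstar = - \<infinity>" unfolding J_obj_def using al by simp
    then show ?thesis using Jle by simp
  qed
  have "ereal (\<alpha> * ln Z) \<le> ereal ((\<Sum>x\<in>UNIV. pstar T x * r x) - \<alpha> * K)"
    using Jle unfolding J_obj_def K using K0 by simp
  then have "\<alpha> * ln Z \<le> (\<Sum>x\<in>UNIV. pstar T x * r x) - \<alpha> * K" by simp
  moreover have "(\<Sum>x\<in>UNIV. pstar T x * r x) = \<alpha> * (\<Sum>x\<in>UNIV. pstar T x * g0 x)"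
    unfolding g0_def using al by (simp add: sum_distrib_left)
  ultimately have "\<alpha> * K \<le> \<alpha> * ((\<Sum>x\<in>UNIV. pstar T x * g0 x) - ln Z)" by (simp add: algebra_simps)
  then have Kle: "K \<le> (\<Sum>x\<in>UNIV. pstar T x * g0 x) - ln Z" using al by simp
  have main: "pstar T x1 = (1 / Z) * exp (r x1 / \<alpha>) * ppre T x1" for x1
  proof -
    define c where "c = ppre T x1 * exp (g0 x1)"
    define \<psi> where "\<psi> s = s * pstar T x1 + (\<Sum>x\<in>UNIV. pstar T x * g0 x) - ln (Z + c * (exp s - 1))" for s
    have up: "\<psi> s \<le> K" for s
    proof -
      define gs where "gs x = g0 x + (if x = x1 then s else 0)" for x
      obtain hs where hsT: "\<forall>x. hs T x = exp (gs x)" and hspos: "\<forall>t\<in>{0..T}. \<forall>x. hs t x > 0"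
        and hsder: "\<forall>t\<in>{0..T}. \<forall>x. ((\<lambda>s. hs s x) has_real_derivative - (\<Sum>y\<in>UNIV - {x}. Qpre t x y * (hs t y - hs t x))) (at t within {0..T})"
        using h_exists[OF genpre T0, of gs] by blast
      have u: "(\<Sum>x\<in>UNIV. pstar T x * gs x) - ln (hs 0 x0) \<le> K"
        by (rule upper[OF T0 genpre gens fss hspos hsder hsT K K0])
      have e1: "(\<Sum>x\<in>UNIV. pstar T x * gs x) = s * pstar T x1 + (\<Sum>x\<in>UNIV. pstar T x * g0 x)"
      proof -
        have "(\<Sum>x\<in>UNIV. pstar T x * gs x) = (\<Sum>x\<in>UNIV. pstar T x * g0 x) + (\<Sum>x\<in>UNIV. if x = x1 then pstar T x * s else 0)"
        proof -
          have "pstar T x * gs x = pstar T x * g0 x + (if x = x1 then pstar T x * s else 0)" for x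
            unfolding gs_def by (simp add: distrib_left)
          then show ?thesis by (simp only: sum.distrib)
        qed
        then show ?thesis by simp
      qed
      have e2: "hs 0 x0 = Z + c * (exp s - 1)"
      proof -
        have "hs 0 x0 = (\<Sum>x\<in>UNIV. ppre T x * exp (gs x))" by (rule Zform[OF hsder hsT])
        also have "\<dots> = ppre T x1 * exp (gs x1) + (\<Sum>x\<in>UNIV - {x1}. ppre T x * exp (gs x))" by (rule sum_rem)
        also have "(\<Sum>x\<in>UNIV - {x1}. ppre T x * exp (gs x)) = (\<Sum>x\<in>UNIV - {x1}. ppre T x * exp (g0 x))"
          unfolding gs_def by (intro sum.cong) auto
        also have "Z = ppre T x1 * exp (g0 x1) + (\<Sum>x\<in>UNIV - {x1}. ppre T x * exp (g0 x))"
          unfolding Zeq by (rule sum_rem)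
        ultimately show ?thesis unfolding c_def gs_def by (simp add: exp_add algebra_simps)
      qed
      show ?thesis using u unfolding e1 e2 \<psi>_def .
    qed
    have at0: "\<psi> 0 \<ge> K" unfolding \<psi>_def using Kle by simp
    have der: "DERIV \<psi> 0 :> pstar T x1 - c * exp 0 / (Z + c * (exp 0 - 1))"
      unfolding \<psi>_def
      by (rule derivative_eq_intros refl | (simp add: Zpos))+
    have "pstar T x1 - c * exp 0 / (Z + c * (exp 0 - 1)) = 0"
    proof (rule DERIV_local_max[OF der, of 1])
      show "\<forall>y. \<bar>0 - y\<bar> < 1 \<longrightarrow> \<psi> y \<le> \<psi> 0" using up at0 by (meson order_trans)
    qed simp
    then have "pstar T x1 = c / Z" by simp
    then show ?thesis unfolding c_def g0_def by simp
  qed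
  show ?thesis by (rule exI[of _ "1 / Z"]) (use main in blast)
qed



end
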